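(* Let $\mu$ be a probability measure on $\mathbb{R}^p$ whose support contains a nonempty open set, let $\sigma>0$, $R>0$, and let $G^*$ and $G_n$ ($n\ge1$) be probability measures on $\mathbb{R}^p$ with $G_n\{\beta:\|\beta\|\le R\}=1$ for all $n$ and $G^*\{\beta:\|\beta\|\le R\}=1$. If $\mathfrak{d}_{\mathrm{LP}}(P(G_n,\mu),P(G^*,\mu))\to0$, then $\mathfrak{d}_{\mathrm{LP}}(G_n,G^* )\to0$.
   Context: For a probability measure $G$ on $\mathbb{R}^p$, $P(G,\mu)$ denotes the joint distribution on $\mathbb{R}^p\times\mathbb{R}$ of $(X,Y)$ where $Y=X^\top\beta+\sigma Z$ with $X\sim\mu$, $\beta\sim G$, $Z\sim N(0,1)$ independent. $\mathfrak{d}_{\mathrm{LP}}$ is the Lévy–Prokhorov metric. *)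

theory Defs
  imports "HOL-Probability.Probability"
begin

definition thick :: "'b::metric_space set \<Rightarrow> real \<Rightarrow> 'b set" where
  "thick A e = {x. \<exists>y\<in>A. dist x y < e}"

definition lp_dist :: "'b::metric_space measure \<Rightarrow> 'b measure \<Rightarrow> real" where
  "lp_dist M N = Inf {e. e > 0 \<and> (\<forall>A\<in>sets borel.
       measure M A \<le> measure N (thick A e) + e \<and> measure N A \<le> measure M (thick A e) + e)}"

definition msupport :: "'b::topological_space measure \<Rightarrow> 'b set" where
  "msupport M = {x. \<forall>U. open U \<and> x \<in> U \<longrightarrow> emeasure M U > 0}"

definition std_normal :: "real measure" where
  "std_normal = density lborel std_normal_density"

text \<open>P(G,mu): law of (X, X.beta + sigma Z) with X ~ mu, beta ~ G, Z ~ N(0,1) independent.\<close>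
definition lin_model :: "real \<Rightarrow> 'a::euclidean_space measure \<Rightarrow> 'a measure \<Rightarrow> ('a \<times> real) measure" where
  "lin_model \<sigma> G \<mu> = distr ((\<mu> \<Otimes>\<^sub>M G) \<Otimes>\<^sub>M std_normal) borel
      (\<lambda>((x, b), z). (x, x \<bullet> b + \<sigma> * z))"

end

theory Submission
  imports Defs
begin


lemma sum_ind_lower:
  "min (real K) (t - 1) \<le> (\<Sum>k=1..K. if real k < t then 1 else 0 :: real)"
proof (induction K)
  case 0 then show ?case by simp
next
  case (Suc K)
  have "(\<Sum>k=1..Suc K. if real k < t then 1 else 0 :: real) =
     (\<Sum>k=1..K. if real k < t then 1 else 0 :: real) + (if real (Suc K) < t then 1 else 0)"
    by simp
  with Suc show ?case by (auto simp: min_def split: if_splits)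
qed

lemma sum_ind_le_card:
  "(\<Sum>k=1..K. if real k < t then 1 else 0 :: real) \<le> real K"
proof -
  have "(\<Sum>k=1..K. if real k < t then 1 else 0 :: real) \<le> (\<Sum>k=1..K. 1)"
    by (intro sum_mono) auto
  then show ?thesis by simp
qed

lemma sum_ind_upper:
  "(\<Sum>k=1..K. if real k < t then 1 else 0 :: real) \<le> max 0 t"
proof (induction K)
  case 0 then show ?case by simp
next
  case (Suc K)
  have "(\<Sum>k=1..Suc K. if real k < t then 1 else 0 :: real) =
     (\<Sum>k=1..K. if real k < t then 1 else 0 :: real) + (if real (Suc K) < t then 1 else 0)"
    by simp
  with Suc sum_ind_le_card[where K=K and t=t] show ?case by (auto split: if_splits)
qed

lemma open_thick: "open (thick A e)"
proof -
  have "thick A e = (\<Union>y\<in>A. ball y e)" by (auto simp: thick_def dist_commute)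
  then show ?thesis by auto
qed

lemma prob_ind_int[intro]: "prob_space M \<Longrightarrow> A \<in> sets M \<Longrightarrow> integrable M (indicator A :: _ \<Rightarrow> real)"
  by (rule finite_measure.integrable_const_bound[where B=1]) (auto simp: prob_space_def)

lemma lp_int_bound_K:
  fixes P Q :: "'b::metric_space measure" and F :: "'b \<Rightarrow> real"
  assumes P: "prob_space P" and Q: "prob_space Q"
    and sP: "sets P = sets borel" and sQ: "sets Q = sets borel"
    and F01: "\<And>x. 0 \<le> F x \<and> F x \<le> 1"
    and Lip: "\<And>x y. F x - F y \<le> L * dist x y" and L: "L \<ge> 0"
    and Fm: "F \<in> borel_measurable borel"
    and e: "e > 0" and A: "\<forall>A\<in>sets borel. measure P A \<le> measure Q (thick A e) + e"
    and K: "K > 0"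
  shows "integral\<^sup>L P F \<le> 1 / real K + e + integral\<^sup>L Q F + L * e"
proof -
  interpret P: prob_space P by fact
  interpret Q: prob_space Q by fact
  have FmP[measurable]: "F \<in> borel_measurable P" using Fm measurable_cong_sets[OF sP refl] by blast
  have FmQ[measurable]: "F \<in> borel_measurable Q" using Fm measurable_cong_sets[OF sQ refl] by blast
  define S where "S k = {x. real k < real K * F x}" for k :: nat
  define T where "T k = {x. real k < real K * (F x + L * e)}" for k :: nat
  have S_meas: "S k \<in> sets borel" for k unfolding S_def using Fm by measurable
  have T_meas: "T k \<in> sets Q" for k unfolding T_def sQ using Fm by measurable
  have SP: "S k \<in> sets P" for k using S_meas sP by simp
  have intP: "integrable P F" 
    by (rule P.integrable_const_bound[where B=1]) (use F01 in auto)
  have intQ: "integrable Q F" 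
    by (rule Q.integrable_const_bound[where B=1]) (use F01 in auto)
  have ind_eq: "(if real k < t then 1 else 0 :: real) = indicator {x. real k < t} x" for k t and x :: 'b
    by (simp add: indicator_def)
  have pt1: "F x \<le> (1 + (\<Sum>k=1..K. indicator (S k) x)) / real K" for x
  proof -
    have "min (real K) (real K * F x - 1) \<le> (\<Sum>k=1..K. if real k < real K * F x then 1 else 0 :: real)"
      by (rule sum_ind_lower)
    moreover have "real K * F x \<le> real K" using F01[of x] by (simp add: mult_left_le)
    then have "min (real K) (real K * F x - 1) = real K * F x - 1"
      by (simp add: min_def)
    moreover have "(\<Sum>k=1..K. indicator (S k) x) = (\<Sum>k=1..K. if real k < real K * F x then 1 else 0 :: real)"
      by (intro sum.cong) (auto simp: S_def indicator_def)
    ultimately have "real K * F x \<le> 1 + (\<Sum>k=1..K. indicator (S k) x)"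
      by linarith
    then show ?thesis using K by (simp add: field_simps)
  qed
  have pt2: "(\<Sum>k=1..K. indicator (T k) x) \<le> real K * (F x + L * e)" for x
  proof -
    have "(\<Sum>k=1..K. if real k < real K * (F x + L * e) then 1 else 0 :: real) \<le> max 0 (real K * (F x + L * e))"
      by (rule sum_ind_upper)
    moreover have "0 \<le> real K * (F x + L * e)" using F01[of x] L e by simp
    moreover have "(\<Sum>k=1..K. indicator (T k) x) = (\<Sum>k=1..K. if real k < real K * (F x + L * e) then 1 else 0 :: real)"
      by (intro sum.cong) (auto simp: T_def indicator_def)
    ultimately show ?thesis by linarith
  qed
  have intS: "integrable P (\<lambda>x. 1 + (\<Sum>k=1..K. indicator (S k) x :: real))"
    apply (rule Bochner_Integration.integrable_add)
     apply (rule P.integrable_const)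
    apply (rule Bochner_Integration.integrable_sum)
    apply (rule prob_ind_int[OF P SP])
    done
  have intT: "integrable Q (\<lambda>x. (\<Sum>k=1..K. indicator (T k) x :: real))"
    by (intro Bochner_Integration.integrable_sum prob_ind_int Q T_meas)
  have spP: "space P = UNIV" using sets_eq_imp_space_eq[OF sP] by simp
  have spQ: "space Q = UNIV" using sets_eq_imp_space_eq[OF sQ] by simp
  have pU: "measure P UNIV = 1" using P.prob_space spP by simp
  have qU: "measure Q UNIV = 1" using Q.prob_space spQ by simp
  have "integral\<^sup>L P F \<le> integral\<^sup>L P (\<lambda>x. (1 + (\<Sum>k=1..K. indicator (S k) x)) / real K)"
    by (intro Bochner_Integration.integral_mono intP pt1 Bochner_Integration.integrable_divide intS)
  also have "\<dots> = (1 + (\<Sum>k=1..K. measure P (S k))) / real K"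
  proof -
    have "integral\<^sup>L P (\<lambda>x. 1 + (\<Sum>k=1..K. indicator (S k) x)) = 
       integral\<^sup>L P (\<lambda>x. 1) + integral\<^sup>L P (\<lambda>x. (\<Sum>k=1..K. indicator (S k) x :: real))"
      by (intro Bochner_Integration.integral_add Bochner_Integration.integrable_sum P.integrable_const prob_ind_int P SP)
    also have "\<dots> = 1 + (\<Sum>k=1..K. measure P (S k))"
      by (subst Bochner_Integration.integral_sum) (auto intro: prob_ind_int[OF P SP] simp: SP spP pU)
    finally show ?thesis by (simp add: integral_divide_zero)
  qed
  also have "\<dots> \<le> (1 + (\<Sum>k=1..K. measure Q (T k) + e)) / real K"
  proof -
    have "measure P (S k) \<le> measure Q (T k) + e" for k
    proof -
      have "measure P (S k) \<le> measure Q (thick (S k) e) + e" using A S_meas by blast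
      moreover have "thick (S k) e \<subseteq> T k"
      proof
        fix x assume "x \<in> thick (S k) e"
        then obtain y where y: "y \<in> S k" "dist x y < e" by (auto simp: thick_def)
        have "F y - F x \<le> L * dist y x" by (rule Lip)
        also have "\<dots> \<le> L * e" using y(2) L by (simp add: dist_commute mult_left_mono)
        finally have "real K * F y \<le> real K * (F x + L * e)" by (simp add: mult_left_mono)
        with y(1) show "x \<in> T k" by (auto simp: S_def T_def)
      qed
      then have "measure Q (thick (S k) e) \<le> measure Q (T k)"
        by (intro Q.finite_measure_mono T_meas)
      ultimately show ?thesis by simp
    qed
    then show ?thesis using K by (intro divide_right_mono add_left_mono sum_mono) auto
  qed
  also have "\<dots> = (1 + real K * e + integral\<^sup>L Q (\<lambda>x. \<Sum>k=1..K. indicator (T k) x)) / real K"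
  proof -
    have "(\<Sum>k=1..K. measure Q (T k) + e) = (\<Sum>k=1..K. measure Q (T k)) + real K * e"
      by (simp add: sum.distrib)
    moreover have "integral\<^sup>L Q (\<lambda>x. \<Sum>k=1..K. indicator (T k) x) = (\<Sum>k=1..K. measure Q (T k))"
      by (subst Bochner_Integration.integral_sum) (auto intro: prob_ind_int[OF Q T_meas] simp: T_meas spQ)
    ultimately show ?thesis by simp
  qed
  also have "\<dots> \<le> (1 + real K * e + integral\<^sup>L Q (\<lambda>x. real K * (F x + L * e))) / real K"
    using K by (intro divide_right_mono add_left_mono Bochner_Integration.integral_mono pt2 intT
       Bochner_Integration.integrable_mult_right Bochner_Integration.integrable_add intQ Q.integrable_const) auto
  also have "\<dots> = 1 / real K + e + integral\<^sup>L Q F + L * e"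
  proof -
    have "integral\<^sup>L Q (\<lambda>x. real K * (F x + L * e)) = real K * (integral\<^sup>L Q F + L * e)"
      using intQ by (simp add: qU spQ)
    then show ?thesis using K by (simp add: field_simps)
  qed
  finally show ?thesis .
qed


lemma lp_int_bound:
  fixes P Q :: "'b::metric_space measure" and F :: "'b \<Rightarrow> real"
  assumes P: "prob_space P" and Q: "prob_space Q"
    and sP: "sets P = sets borel" and sQ: "sets Q = sets borel"
    and F01: "\<And>x. 0 \<le> F x \<and> F x \<le> 1"
    and Lip: "\<And>x y. F x - F y \<le> L * dist x y" and L: "L \<ge> 0"
    and Fm: "F \<in> borel_measurable borel"
    and e: "e > 0" and A: "\<forall>A\<in>sets borel. measure P A \<le> measure Q (thick A e) + e"
  shows "integral\<^sup>L P F \<le> e + integral\<^sup>L Q F + L * e"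
proof (rule ccontr)
  assume "\<not> ?thesis"
  then have d: "integral\<^sup>L P F - (e + integral\<^sup>L Q F + L * e) > 0" by simp
  obtain K :: nat where K: "1 / (integral\<^sup>L P F - (e + integral\<^sup>L Q F + L * e)) < real K"
    using reals_Archimedean2 by blast
  have K0: "K > 0" using K d by (metis less_le_not_le not_gr_zero of_nat_0 zero_less_divide_1_iff)
  have "integral\<^sup>L P F \<le> 1 / real K + e + integral\<^sup>L Q F + L * e"
    by (rule lp_int_bound_K[OF assms K0])
  moreover have "1 / real K < integral\<^sup>L P F - (e + integral\<^sup>L Q F + L * e)"
    using K d K0 by (simp add: field_simps)
  ultimately show False by simp
qed

lemma lp_set_nonempty:
  assumes "prob_space P" "prob_space Q"
  shows "1 \<in> {e. e > 0 \<and> (\<forall>A\<in>sets borel.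
       measure P A \<le> measure Q (thick A e) + e \<and> measure Q A \<le> measure P (thick A e) + e)}"
proof -
  interpret P: prob_space P by fact
  interpret Q: prob_space Q by fact
  show ?thesis using P.prob_le_1 Q.prob_le_1 
    by (auto simp: measure_nonneg add_increasing P.measure_le_1 Q.measure_le_1)
qed

lemma lp_conv_integral01:
  fixes P :: "nat \<Rightarrow> 'b::metric_space measure" and Q and F :: "'b \<Rightarrow> real"
  assumes P: "\<And>n. prob_space (P n)" and Q: "prob_space Q"
    and sP: "\<And>n. sets (P n) = sets borel" and sQ: "sets Q = sets borel"
    and F01: "\<And>x. 0 \<le> F x \<and> F x \<le> 1"
    and Lip: "\<And>x y. F x - F y \<le> L * dist x y" and L: "L \<ge> 0"
    and Fm: "F \<in> borel_measurable borel"
    and conv: "(\<lambda>n. lp_dist (P n) Q) \<longlonglongrightarrow> 0"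
  shows "(\<lambda>n. integral\<^sup>L (P n) F) \<longlonglongrightarrow> integral\<^sup>L Q F"
proof (rule tendstoI)
  fix \<epsilon> :: real assume \<epsilon>: "\<epsilon> > 0"
  define \<delta> where "\<delta> = \<epsilon> / (2 + L)"
  have \<delta>: "\<delta> > 0" using \<epsilon> L by (simp add: \<delta>_def)
  have "\<forall>\<^sub>F n in sequentially. dist (lp_dist (P n) Q) 0 < \<delta>"
    using conv \<delta> by (rule tendstoD)
  then show "\<forall>\<^sub>F n in sequentially. dist (integral\<^sup>L (P n) F) (integral\<^sup>L Q F) < \<epsilon>"
  proof eventually_elim
    case (elim n)
    define E where "E = {e. e > 0 \<and> (\<forall>A\<in>sets borel.
       measure (P n) A \<le> measure Q (thick A e) + e \<and> measure Q A \<le> measure (P n) (thick A e) + e)}"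
    have "1 \<in> E" unfolding E_def by (rule lp_set_nonempty[OF P Q])
    moreover have "Inf E < \<delta>" using elim by (simp add: E_def lp_dist_def dist_real_def abs_less_iff)
    ultimately obtain e where eE: "e \<in> E" and ed: "e < \<delta>" using cInf_lessD by blast
    have e0: "e > 0" using eE by (simp add: E_def)
    have A1: "\<forall>A\<in>sets borel. measure (P n) A \<le> measure Q (thick A e) + e" using eE by (simp add: E_def)
    have A2: "\<forall>A\<in>sets borel. measure Q A \<le> measure (P n) (thick A e) + e" using eE by (simp add: E_def)
    have "integral\<^sup>L (P n) F \<le> e + integral\<^sup>L Q F + L * e"
      by (rule lp_int_bound[OF P Q sP sQ F01 Lip L Fm e0 A1])
    moreover have "integral\<^sup>L Q F \<le> e + integral\<^sup>L (P n) F + L * e"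
      by (rule lp_int_bound[OF Q P sQ sP F01 Lip L Fm e0 A2])
    moreover have "e + L * e < \<epsilon>"
    proof -
      have "e + L * e = e * (1 + L)" by (simp add: algebra_simps)
      also have "\<dots> < \<delta> * (2 + L)" using ed e0 L by (intro mult_strict_mono) auto
      also have "\<dots> = \<epsilon>" using L by (simp add: \<delta>_def)
      finally show ?thesis .
    qed
    ultimately show ?case by (simp add: dist_real_def abs_less_iff)
  qed
qed


lemma infdist_lt_finite:
  assumes "D \<noteq> {}" "infdist x D < d"
  shows "\<exists>c\<in>D. dist x c < d"
proof -
  from assms(2) have "(if D = {} then 0 else INF a\<in>D. dist x a) < d" unfolding infdist_def .
  with assms(1) have lt: "Inf (dist x ` D) < d" by simp
  have ne: "dist x ` D \<noteq> {}" using assms(1) by simp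
  obtain y where "y \<in> dist x ` D" "y < d" using cInf_lessD[OF ne lt] by blast
  then show ?thesis by auto
qed

definition bumpf :: "'a::metric_space set \<Rightarrow> real \<Rightarrow> 'a \<Rightarrow> real" where
  "bumpf D e x = max 0 (min 1 (2 - infdist x D * (3 / e)))"

lemma bumpf_cont: "continuous_on UNIV (bumpf D e)"
proof -
  have "continuous_on UNIV (\<lambda>x. infdist x D)"
    by (rule continuous_on_infdist[OF continuous_on_id])
  then show ?thesis unfolding bumpf_def by (intro continuous_intros)
qed

lemma bumpf_01: "0 \<le> bumpf D e x \<and> bumpf D e x \<le> 1"
  unfolding bumpf_def by auto

lemma bumpf_abs: "\<bar>bumpf D e x\<bar> \<le> 1"
  using bumpf_01[of D e x] by (simp add: abs_le_iff)

lemma lp_step: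
  fixes M1 M2 :: "'a::metric_space measure"
  assumes M1: "prob_space M1" and M2: "prob_space M2"
    and s1: "sets M1 = sets borel" and s2: "sets M2 = sets borel"
    and AE1: "AE x in M1. x \<in> K"
    and cov: "K \<subseteq> (\<Union>c\<in>C. ball c (e/3))" and e: "e > 0"
    and A: "A \<in> sets borel"
    and D: "D = {c\<in>C. \<exists>a\<in>A \<inter> K. dist a c < e/3}" and Dne: "D \<noteq> {}"
  shows "measure M1 A \<le> integral\<^sup>L M1 (bumpf D e)"
    and "integral\<^sup>L M2 (bumpf D e) \<le> measure M2 (thick A e)"
proof -
  interpret M1: prob_space M1 by fact
  interpret M2: prob_space M2 by fact
  have sp1: "space M1 = UNIV" using sets_eq_imp_space_eq[OF s1] by simp
  have sp2: "space M2 = UNIV" using sets_eq_imp_space_eq[OF s2] by simp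
  have bm: "bumpf D e \<in> borel_measurable borel"
    by (rule borel_measurable_continuous_onI[OF bumpf_cont])
  have bm1: "bumpf D e \<in> borel_measurable M1" using bm measurable_cong_sets[OF s1 refl] by blast
  have bm2: "bumpf D e \<in> borel_measurable M2" using bm measurable_cong_sets[OF s2 refl] by blast
  have int1: "integrable M1 (bumpf D e)"
    by (rule M1.integrable_const_bound[where B=1]) (use bumpf_abs bm1 in auto)
  have int2: "integrable M2 (bumpf D e)"
    by (rule M2.integrable_const_bound[where B=1]) (use bumpf_abs bm2 in auto)
  have A1: "A \<in> sets M1" using A s1 by simp
  have Th: "thick A e \<in> sets M2" using borel_open[OF open_thick] s2 by simp
  have "measure M1 A = integral\<^sup>L M1 (indicator A)" using sp1 by simp
  also have "\<dots> \<le> integral\<^sup>L M1 (bumpf D e)"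
  proof (rule integral_mono_AE)
    show "integrable M1 (indicator A :: _ \<Rightarrow> real)" using A1 M1 by (rule prob_ind_int[rotated])
    show "integrable M1 (bumpf D e)" by (rule int1)
    show "AE x in M1. indicator A x \<le> bumpf D e x"
      using AE1
    proof eventually_elim
      case (elim x)
      show ?case
      proof (cases "x \<in> A")
        case True
        obtain c where c: "c \<in> C" "x \<in> ball c (e/3)" using cov elim by blast
        have cD: "c \<in> D" using c True elim by (auto simp: D dist_commute)
        have "infdist x D \<le> dist x c" by (rule infdist_le[OF cD])
        also have "\<dots> < e/3" using c by (simp add: dist_commute)
        finally have "infdist x D * (3 / e) < 1" using e by (simp add: field_simps)
        then show ?thesis using True by (simp add: bumpf_def)
      next
        case False then show ?thesis using bumpf_01[of D e x] by simp
      qed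
    qed
  qed
  finally show "measure M1 A \<le> integral\<^sup>L M1 (bumpf D e)" .
  have "integral\<^sup>L M2 (bumpf D e) \<le> integral\<^sup>L M2 (indicator (thick A e))"
  proof (rule Bochner_Integration.integral_mono)
    show "integrable M2 (indicator (thick A e) :: _ \<Rightarrow> real)" using Th M2 by (rule prob_ind_int[rotated])
    show "integrable M2 (bumpf D e)" by (rule int2)
    fix x
    show "bumpf D e x \<le> indicator (thick A e) x"
    proof (cases "bumpf D e x = 0")
      case True then show ?thesis by simp
    next
      case False
      have "2 - infdist x D * (3/e) > 0"
      proof (rule ccontr)
        assume "\<not> 2 - infdist x D * (3/e) > 0"
        then have "min 1 (2 - infdist x D * (3/e)) \<le> 0" by linarith
        then have "bumpf D e x = 0" unfolding bumpf_def by (simp add: max_absorb1)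
        with False show False by simp
      qed
      then have "infdist x D * (3 / e) < 2" by simp
      then have "infdist x D < 2 * e / 3" using e by (simp add: field_simps)
      then obtain c where c: "c \<in> D" "dist x c < 2 * e / 3" using infdist_lt_finite Dne by blast
      then obtain a where a: "a \<in> A" "dist a c < e/3" by (auto simp: D)
      have "dist x a \<le> dist x c + dist a c" by (simp add: dist_triangle2)
      then have "dist x a < e" using a c by simp
      then have "x \<in> thick A e" using a by (auto simp: thick_def)
      then show ?thesis using bumpf_01[of D e x] by simp
    qed
  qed
  also have "\<dots> = measure M2 (thick A e)" using sp2 by simp
  finally show "integral\<^sup>L M2 (bumpf D e) \<le> measure M2 (thick A e)" .
qed


lemma measure_zero_outside:
  assumes "AE x in M. x \<in> K" "A \<in> sets M" "A \<inter> K = {}"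
  shows "measure M A = 0"
proof -
  have "AE x in M. x \<notin> A" using assms(1) by eventually_elim (use assms(3) in blast)
  moreover have eq: "{x \<in> space M. \<not> x \<notin> A} = A" using sets.sets_into_space[OF assms(2)] by auto
  ultimately have "emeasure M A = 0" using AE_iff_measurable[OF assms(2) eq] by blast
  then show ?thesis by (simp add: measure_def)
qed

lemma weak_imp_lp:
  fixes G :: "nat \<Rightarrow> 'a::metric_space measure" and Gs :: "'a measure"
  assumes G: "\<And>n. prob_space (G n)" and sG: "\<And>n. sets (G n) = sets borel"
    and Gs: "prob_space Gs" and sGs: "sets Gs = sets borel"
    and K: "compact K"
    and AEG: "\<And>n. AE x in G n. x \<in> K" and AEGs: "AE x in Gs. x \<in> K"
    and weak: "\<And>f::'a \<Rightarrow> real. continuous_on UNIV f \<Longrightarrow> (\<And>x. \<bar>f x\<bar> \<le> 1) \<Longrightarrow>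
       (\<lambda>n. integral\<^sup>L (G n) f) \<longlonglongrightarrow> integral\<^sup>L Gs f"
  shows "(\<lambda>n. lp_dist (G n) Gs) \<longlonglongrightarrow> 0"
proof (rule tendstoI)
  fix \<epsilon> :: real assume \<epsilon>: "\<epsilon> > 0"
  define e where "e = \<epsilon> / 2"
  have e: "e > 0" using \<epsilon> by (simp add: e_def)
  have "K \<subseteq> \<Union> ((\<lambda>c. ball c (e/3)) ` K)" using e by auto
  then obtain C where C: "C \<subseteq> K" "finite C" "K \<subseteq> (\<Union>c\<in>C. ball c (e/3))"
    using compactE_image[OF K, of K "\<lambda>c. ball c (e/3)"] by blast
  have "\<forall>\<^sub>F n in sequentially. \<forall>D\<in>Pow C.
      dist (integral\<^sup>L (G n) (bumpf D e)) (integral\<^sup>L Gs (bumpf D e)) < e"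
  proof (rule eventually_ball_finite)
    show "finite (Pow C)" using C by simp
    show "\<forall>D\<in>Pow C. \<forall>\<^sub>F n in sequentially. dist (integral\<^sup>L (G n) (bumpf D e)) (integral\<^sup>L Gs (bumpf D e)) < e"
    proof
      fix D assume "D \<in> Pow C"
      show "\<forall>\<^sub>F n in sequentially. dist (integral\<^sup>L (G n) (bumpf D e)) (integral\<^sup>L Gs (bumpf D e)) < e"
        using weak[of "bumpf D e", OF bumpf_cont bumpf_abs] e by (rule tendstoD)
    qed
  qed
  then show "\<forall>\<^sub>F n in sequentially. dist (lp_dist (G n) Gs) 0 < \<epsilon>"
  proof eventually_elim
    case (elim n)
    define E where "E = {e. e > 0 \<and> (\<forall>A\<in>sets borel.
       measure (G n) A \<le> measure Gs (thick A e) + e \<and> measure Gs A \<le> measure (G n) (thick A e) + e)}"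
    have "e \<in> E"
    proof -
      have "measure (G n) A \<le> measure Gs (thick A e) + e \<and> measure Gs A \<le> measure (G n) (thick A e) + e"
        if A: "A \<in> sets borel" for A
      proof (cases "{c\<in>C. \<exists>a\<in>A \<inter> K. dist a c < e/3} = {}")
        case True
        have AK: "A \<inter> K = {}"
        proof (rule ccontr)
          assume "A \<inter> K \<noteq> {}"
          then obtain a where a: "a \<in> A \<inter> K" by blast
          then obtain c where "c \<in> C" "a \<in> ball c (e/3)" using C(3) by blast
          then have "c \<in> {c\<in>C. \<exists>a\<in>A \<inter> K. dist a c < e/3}" using a by (auto simp: dist_commute)
          with True show False by blast
        qed
        have "measure (G n) A = 0" by (rule measure_zero_outside[OF AEG _ AK]) (use A sG in simp)
        moreover have "measure Gs A = 0" by (rule measure_zero_outside[OF AEGs _ AK]) (use A sGs in simp)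
        ultimately show ?thesis using e by (simp add: measure_nonneg add_nonneg_nonneg)
      next
        case False
        define D where "D = {c\<in>C. \<exists>a\<in>A \<inter> K. dist a c < e/3}"
        have DC: "D \<in> Pow C" by (auto simp: D_def)
        have Dne: "D \<noteq> {}" using False by (simp add: D_def)
        have d: "dist (integral\<^sup>L (G n) (bumpf D e)) (integral\<^sup>L Gs (bumpf D e)) < e"
          using elim DC by blast
        have 1: "measure (G n) A \<le> integral\<^sup>L (G n) (bumpf D e)"
          by (rule lp_step(1)[OF G Gs sG sGs AEG C(3) e A D_def Dne])
        have 2: "integral\<^sup>L Gs (bumpf D e) \<le> measure Gs (thick A e)"
          by (rule lp_step(2)[OF G Gs sG sGs AEG C(3) e A D_def Dne])
        have 3: "measure Gs A \<le> integral\<^sup>L Gs (bumpf D e)"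
          by (rule lp_step(1)[OF Gs G sGs sG AEGs C(3) e A D_def Dne])
        have 4: "integral\<^sup>L (G n) (bumpf D e) \<le> measure (G n) (thick A e)"
          by (rule lp_step(2)[OF Gs G sGs sG AEGs C(3) e A D_def Dne])
        show ?thesis using 1 2 3 4 d by (simp add: dist_real_def abs_less_iff)
      qed
      then show ?thesis using e by (simp add: E_def)
    qed
    have bdd: "bdd_below E" by (rule bdd_belowI[where m=0]) (auto simp: E_def)
    have "lp_dist (G n) Gs = Inf E" by (simp add: lp_dist_def E_def)
    moreover have "Inf E \<le> e" by (rule cInf_lower[OF \<open>e \<in> E\<close> bdd])
    moreover have "0 \<le> Inf E" by (rule cInf_greatest) (use \<open>e \<in> E\<close> in \<open>auto simp: E_def\<close>)
    ultimately show ?case using \<epsilon> by (simp add: e_def dist_real_def)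
  qed
qed


lemma int_close:
  fixes g h :: "'b \<Rightarrow> 'c::{banach, second_countable_topology}"
  assumes "prob_space M" "integrable M g" "integrable M h" "AE x in M. norm (g x - h x) \<le> e"
  shows "norm (integral\<^sup>L M g - integral\<^sup>L M h) \<le> e"
proof -
  interpret prob_space M by fact
  have "integral\<^sup>L M g - integral\<^sup>L M h = integral\<^sup>L M (\<lambda>x. g x - h x)"
    using assms(2,3) by simp
  also have "norm \<dots> \<le> integral\<^sup>L M (\<lambda>x. norm (g x - h x))" by (rule integral_norm_bound)
  also have "\<dots> \<le> integral\<^sup>L M (\<lambda>x. e)"
    using assms(2,3,4) by (intro integral_mono_AE) auto
  also have "\<dots> = e" by (simp add: prob_space)
  finally show ?thesis .
qed

locale wk =
  fixes G :: "nat \<Rightarrow> 'a::euclidean_space measure" and Gs :: "'a measure" and R :: real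
  assumes G: "\<And>n. prob_space (G n)" and sG: "\<And>n. sets (G n) = sets borel"
    and Gs: "prob_space Gs" and sGs: "sets Gs = sets borel"
    and AEG: "\<And>n. AE x in G n. x \<in> cball 0 R" and AEGs: "AE x in Gs. x \<in> cball 0 R"
begin

definition good :: "('a \<Rightarrow> complex) \<Rightarrow> bool" where
  "good g \<longleftrightarrow> (\<lambda>n. integral\<^sup>L (G n) g) \<longlonglongrightarrow> integral\<^sup>L Gs g"

lemma bound_cont:
  fixes g :: "'a \<Rightarrow> 'b::real_normed_vector"
  assumes "continuous_on UNIV g"
  shows "\<exists>B>0. \<forall>b\<in>cball 0 R. norm (g b) \<le> B"
proof -
  have "compact (g ` cball 0 R)"
    by (rule compact_continuous_image[OF continuous_on_subset[OF assms] compact_cball]) simp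
  then have "bounded (g ` cball 0 R)" by (rule compact_imp_bounded)
  then obtain B where "\<forall>y\<in>g ` cball 0 R. norm y \<le> B" by (auto simp: bounded_iff)
  then have "\<forall>b\<in>cball (0::'a) R. norm (g b) \<le> \<bar>B\<bar> + 1"
  proof (intro ballI)
    fix b :: 'a assume "\<forall>y\<in>g ` cball 0 R. norm y \<le> B" "b \<in> cball 0 R"
    then have "norm (g b) \<le> B" by blast
    then show "norm (g b) \<le> \<bar>B\<bar> + 1" by linarith
  qed
  then show ?thesis by (intro exI[of _ "\<bar>B\<bar> + 1"]) auto
qed

lemma int_gen:
  fixes g :: "'a \<Rightarrow> 'b::{banach, second_countable_topology}"
  assumes M: "prob_space M" and sM: "sets M = sets borel" and AE: "AE x in M. x \<in> cball 0 R"
    and g: "continuous_on UNIV g"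
  shows "integrable M g"
proof -
  interpret prob_space M by fact
  obtain B where B: "\<forall>b\<in>cball 0 R. norm (g b) \<le> B" using bound_cont[OF g] by blast
  have gm: "g \<in> borel_measurable M"
    using borel_measurable_continuous_onI[OF g] measurable_cong_sets[OF sM refl] by blast
  show ?thesis
    by (rule integrable_const_bound[where B=B]) (use AE in \<open>eventually_elim, use B in auto\<close>, rule gm)
qed

lemma intG: "continuous_on UNIV g \<Longrightarrow> integrable (G n) (g :: 'a \<Rightarrow> 'b::{banach, second_countable_topology})"
  by (rule int_gen[OF G sG AEG])

lemma intGs: "continuous_on UNIV g \<Longrightarrow> integrable Gs (g :: 'a \<Rightarrow> 'b::{banach, second_countable_topology})"
  by (rule int_gen[OF Gs sGs AEGs])

lemma good_lincomb:
  assumes "continuous_on UNIV g1" "continuous_on UNIV g2" "good g1" "good g2"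
  shows "good (\<lambda>b. a * g1 b + c * g2 b)"
proof -
  have "integral\<^sup>L M (\<lambda>b. a * g1 b + c * g2 b) = a * integral\<^sup>L M g1 + c * integral\<^sup>L M g2"
    if "integrable M g1" "integrable M g2" for M
    using that by simp
  then show ?thesis using assms unfolding good_def
    by (simp add: intG intGs) (intro tendsto_intros)
qed

lemma good_closure:
  assumes g: "continuous_on UNIV g"
    and approx: "\<And>e. e > 0 \<Longrightarrow> \<exists>h. continuous_on UNIV h \<and> good h \<and> (\<forall>b\<in>cball 0 R. norm (g b - h b) \<le> e)"
  shows "good g"
  unfolding good_def
proof (rule tendstoI)
  fix e :: real assume e: "e > 0"
  obtain h where h: "continuous_on UNIV h" "good h" "\<forall>b\<in>cball 0 R. norm (g b - h b) \<le> e/3"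
    using approx[of "e/3"] e by auto
  have "\<forall>\<^sub>F n in sequentially. dist (integral\<^sup>L (G n) h) (integral\<^sup>L Gs h) < e/3"
    using h(2) e unfolding good_def by (intro tendstoD) auto
  then show "\<forall>\<^sub>F n in sequentially. dist (integral\<^sup>L (G n) g) (integral\<^sup>L Gs g) < e"
  proof eventually_elim
    case (elim n)
    have 1: "norm (integral\<^sup>L (G n) g - integral\<^sup>L (G n) h) \<le> e/3"
      by (rule int_close[OF G intG[OF g] intG[OF h(1)]]) (use AEG[of n] in \<open>eventually_elim, use h(3) in auto\<close>)
    have 2: "norm (integral\<^sup>L Gs g - integral\<^sup>L Gs h) \<le> e/3"
      by (rule int_close[OF Gs intGs[OF g] intGs[OF h(1)]]) (use AEGs in \<open>eventually_elim, use h(3) in auto\<close>)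
    define a where "a = integral\<^sup>L (G n) g"
    define b where "b = integral\<^sup>L Gs g"
    define c where "c = integral\<^sup>L (G n) h"
    define d where "d = integral\<^sup>L Gs h"
    have "dist a b = norm ((a - c) + (c - d) - (b - d))" by (simp add: dist_norm algebra_simps)
    also have "\<dots> \<le> norm ((a - c) + (c - d)) + norm (b - d)" by (rule norm_triangle_ineq4)
    also have "\<dots> \<le> norm (a - c) + norm (c - d) + norm (b - d)" using norm_triangle_ineq[of "a - c" "c - d"] by linarith
    finally have "dist (integral\<^sup>L (G n) g) (integral\<^sup>L Gs g) \<le>
       norm (integral\<^sup>L (G n) g - integral\<^sup>L (G n) h) + dist (integral\<^sup>L (G n) h) (integral\<^sup>L Gs h)
        + norm (integral\<^sup>L Gs g - integral\<^sup>L Gs h)" by (simp add: a_def b_def c_def d_def dist_norm)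
    then show ?case using 1 2 elim by linarith
  qed
qed

end


context wk begin

definition P :: "'a \<Rightarrow> ('a \<Rightarrow> complex) \<Rightarrow> bool" where
  "P x0 g \<longleftrightarrow> continuous_on UNIV g \<and> (\<exists>\<rho>>0. \<forall>x\<in>ball x0 \<rho>. good (\<lambda>b. g b * iexp (x \<bullet> b)))"

lemma cont_iexp_inner: "continuous_on UNIV (\<lambda>b. iexp (x \<bullet> b))"
  by (intro continuous_intros)

lemma P_lincomb:
  assumes "P x0 g1" "P x0 g2"
  shows "P x0 (\<lambda>b. a * g1 b + c * g2 b)"
proof -
  obtain \<rho>1 where c1: "continuous_on UNIV g1" and r1: "\<rho>1 > 0" and g1: "\<forall>x\<in>ball x0 \<rho>1. good (\<lambda>b. g1 b * iexp (x \<bullet> b))"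
    using assms(1) by (auto simp: P_def)
  obtain \<rho>2 where c2: "continuous_on UNIV g2" and r2: "\<rho>2 > 0" and g2: "\<forall>x\<in>ball x0 \<rho>2. good (\<lambda>b. g2 b * iexp (x \<bullet> b))"
    using assms(2) by (auto simp: P_def)
  have "good (\<lambda>b. (a * g1 b + c * g2 b) * iexp (x \<bullet> b))" if x: "x \<in> ball x0 (min \<rho>1 \<rho>2)" for x
  proof -
    have "good (\<lambda>b. a * (g1 b * iexp (x \<bullet> b)) + c * (g2 b * iexp (x \<bullet> b)))"
      using g1 g2 x by (intro good_lincomb continuous_intros c1 c2) auto
    then show ?thesis by (simp add: algebra_simps)
  qed
  moreover have "continuous_on UNIV (\<lambda>b. a * g1 b + c * g2 b)" by (intro continuous_intros c1 c2)
  ultimately show ?thesis unfolding P_def using r1 r2 by (intro conjI exI[of _ "min \<rho>1 \<rho>2"]) auto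
qed

lemma iexp_quad: "cmod (iexp t - (1 + \<i> * complex_of_real t)) \<le> t^2 / 2"
proof -
  have "cmod (iexp t - (\<Sum>k\<le>1. (\<i> * complex_of_real t)^k / fact k)) \<le> \<bar>t\<bar>^(Suc 1) / fact (Suc 1)"
    by (rule iexp_approx1)
  moreover have "(\<Sum>k\<le>1. (\<i> * complex_of_real t)^k / fact k) = 1 + \<i> * complex_of_real t"
    by (simp add: atMost_Suc)
  moreover have "\<bar>t\<bar>^(Suc 1) / fact (Suc 1) = t^2 / 2" by (simp add: power2_abs power2_eq_square)
  ultimately show ?thesis by simp
qed

lemma P_lin:
  assumes "P x0 g"
  shows "P x0 (\<lambda>b. complex_of_real (b \<bullet> w) * g b)"
proof -
  obtain \<rho> where gc: "continuous_on UNIV g" and r: "\<rho> > 0"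
    and gd: "\<forall>x\<in>ball x0 \<rho>. good (\<lambda>b. g b * iexp (x \<bullet> b))"
    using assms by (auto simp: P_def)
  obtain B where B: "B > 0" "\<forall>b\<in>cball 0 R. norm (g b) \<le> B" using bound_cont[OF gc] by blast
  have "good (\<lambda>b. complex_of_real (b \<bullet> w) * g b * iexp (x \<bullet> b))" if x: "x \<in> ball x0 (\<rho>/2)" for x
  proof (rule good_closure)
    show "continuous_on UNIV (\<lambda>b. complex_of_real (b \<bullet> w) * g b * iexp (x \<bullet> b))"
      by (intro continuous_intros gc)
    fix e :: real assume e: "e > 0"
    define M where "M = B * ((R * norm w)^2 + 1)"
    have "(R * norm w)^2 + 1 > 0" by (smt (verit) zero_le_power2)
    then have M: "M > 0" using B by (simp add: M_def)
    define h where "h = min (\<rho> / (2 * (norm w + 1))) (e / M)"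
    have "2 * (norm w + 1) > 0" by (simp add: add_nonneg_pos)
    then have h: "h > 0" using r e M by (simp add: h_def)
    have hM: "h * M \<le> e" using M by (simp add: h_def min_def field_simps split: if_splits)
    have hw: "h * norm w \<le> \<rho> / 2"
    proof -
      have "h * norm w \<le> (\<rho> / (2 * (norm w + 1))) * (norm w + 1)"
        using h r by (intro mult_mono) (auto simp: h_def)
      also have "\<dots> = \<rho> / 2"
      proof -
        have nz: "norm w + 1 > 0" by (simp add: add_nonneg_pos)
        then show ?thesis by (simp add: field_simps)
      qed
      finally show ?thesis .
    qed
    have xh: "x + h *\<^sub>R w \<in> ball x0 \<rho>"
    proof -
      have "dist x0 (x + h *\<^sub>R w) \<le> dist x0 x + dist x (x + h *\<^sub>R w)" by (rule dist_triangle)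
      also have "dist x (x + h *\<^sub>R w) = h * norm w" using h by (simp add: dist_norm)
      finally show ?thesis using x hw by simp
    qed
    have x\<rho>: "x \<in> ball x0 \<rho>" using x r by simp
    define q where "q b = (- \<i> / complex_of_real h) * (g b * iexp ((x + h *\<^sub>R w) \<bullet> b))
       + (\<i> / complex_of_real h) * (g b * iexp (x \<bullet> b))" for b
    have qc: "continuous_on UNIV q" unfolding q_def by (intro continuous_intros gc)
    have qg: "good q" unfolding q_def
      using gd xh x\<rho> by (intro good_lincomb continuous_intros gc) auto
    have "norm (complex_of_real (b \<bullet> w) * g b * iexp (x \<bullet> b) - q b) \<le> e" if b: "b \<in> cball 0 R" for b
    proof -
      define s where "s = b \<bullet> w"
      define E where "E = iexp (x \<bullet> b)"
      have e1: "iexp ((x + h *\<^sub>R w) \<bullet> b) = E * iexp (h * s)"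
        by (simp add: E_def s_def inner_add_left inner_commute[of w b] distrib_left exp_add mult.commute)
      have key: "complex_of_real s * g b * E - q b = g b * E * (\<i> / complex_of_real h) * (iexp (h * s) - (1 + \<i> * complex_of_real (h * s)))"
        unfolding q_def e1 E_def[symmetric] using h by (simp add: field_simps)
      have nE: "norm E = 1" by (simp add: E_def)
      have "norm (complex_of_real s * g b * E - q b) = norm (g b) * (1 / h) * cmod (iexp (h * s) - (1 + \<i> * complex_of_real (h * s)))"
        unfolding key using h by (simp add: norm_mult nE norm_divide)
      also have "\<dots> \<le> B * (1 / h) * ((h * s)^2 / 2)"
        using B b h by (intro mult_mono iexp_quad) auto
      also have "\<dots> = h * (B * s^2 / 2)" using h by (simp add: power2_eq_square field_simps)
      also have "\<dots> \<le> h * M"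
      proof -
        have "\<bar>s\<bar> \<le> norm b * norm w" unfolding s_def by (rule Cauchy_Schwarz_ineq2)
        also have "\<dots> \<le> R * norm w" using b by (intro mult_right_mono) auto
        finally have sa: "\<bar>s\<bar> \<le> R * norm w" .
        have "\<bar>s\<bar>^2 \<le> (R * norm w)^2" by (rule power_mono[OF sa abs_ge_zero])
        then have s2: "s^2 \<le> (R * norm w)^2" by (simp add: power2_abs)
        have "B * s^2 \<le> B * ((R * norm w)^2 + 1)" using B s2 by (intro mult_left_mono) auto
        moreover have "0 \<le> B * s^2" using B by simp
        ultimately have "B * s^2 / 2 \<le> M" unfolding M_def by linarith
        then show ?thesis using h by (simp add: mult_left_mono)
      qed
      also have "\<dots> \<le> e" by (rule hM)
      finally show ?thesis by (simp add: s_def E_def)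
    qed
    then show "\<exists>h. continuous_on UNIV h \<and> good h \<and> (\<forall>b\<in>cball 0 R. norm (complex_of_real (b \<bullet> w) * g b * iexp (x \<bullet> b) - h b) \<le> e)"
      using qc qg by blast
  qed
  moreover have "continuous_on UNIV (\<lambda>b. complex_of_real (b \<bullet> w) * g b)" by (intro continuous_intros gc)
  ultimately show ?thesis unfolding P_def using r by (intro conjI exI[of _ "\<rho>/2"]) auto
qed

end


lemma linear_as_inner:
  fixes f :: "'a::euclidean_space \<Rightarrow> real"
  assumes "bounded_linear f"
  shows "f b = b \<bullet> (\<Sum>i\<in>Basis. f i *\<^sub>R i)"
proof -
  have "f b \<bullet> 1 = (\<Sum>i\<in>Basis. (b \<bullet> i) * (f i \<bullet> 1))"
    by (rule Linear_Algebra.linear_componentwise) (use assms bounded_linear.linear in blast)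
  then show ?thesis by (simp add: inner_sum_right mult.commute)
qed

context wk begin

lemma P_realpoly:
  assumes "real_polynomial_function p"
  shows "P x0 g \<Longrightarrow> P x0 (\<lambda>b. complex_of_real (p b) * g b)"
  using assms
proof (induction p arbitrary: g rule: real_polynomial_function.induct)
  case (linear f)
  define w where "w = (\<Sum>i\<in>Basis. f i *\<^sub>R i)"
  have fw: "\<And>b. f b = b \<bullet> w" unfolding w_def by (rule linear_as_inner[OF linear.hyps])
  have "P x0 (\<lambda>b. complex_of_real (b \<bullet> w) * g b)"
    by (rule P_lin[OF linear.prems])
  then show ?case by (simp only: fw)
next
  case (const c)
  have "P x0 (\<lambda>b. complex_of_real c * g b + 0 * g b)"
    by (rule P_lincomb[OF const const])
  then show ?case by simp
next
  case (add f1 f2)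
  have "P x0 (\<lambda>b. 1 * (complex_of_real (f1 b) * g b) + 1 * (complex_of_real (f2 b) * g b))"
    by (rule P_lincomb[OF add.IH(1)[OF add.prems] add.IH(2)[OF add.prems]])
  then show ?case by (simp add: algebra_simps)
next
  case (mult f1 f2)
  have "P x0 (\<lambda>b. complex_of_real (f1 b) * (complex_of_real (f2 b) * g b))"
    by (rule mult.IH(1)[OF mult.IH(2)[OF mult.prems]])
  then show ?case by (simp add: algebra_simps)
qed

lemma P_poly:
  assumes p: "polynomial_function (p :: 'a \<Rightarrow> complex)" and g: "P x0 g"
  shows "P x0 (\<lambda>b. p b * g b)"
proof -
  have r: "real_polynomial_function (\<lambda>b. Re (p b))"
    using p bounded_linear_Re unfolding polynomial_function_def o_def by blast
  have i: "real_polynomial_function (\<lambda>b. Im (p b))"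
    using p bounded_linear_Im unfolding polynomial_function_def o_def by blast
  have "P x0 (\<lambda>b. 1 * (complex_of_real (Re (p b)) * g b) + \<i> * (complex_of_real (Im (p b)) * g b))"
    by (rule P_lincomb[OF P_realpoly[OF r g] P_realpoly[OF i g]])
  moreover have "1 * (complex_of_real (Re (p b)) * g b) + \<i> * (complex_of_real (Im (p b)) * g b) = p b * g b" for b
  proof -
    have pe: "p b * g b = (complex_of_real (Re (p b)) + \<i> * complex_of_real (Im (p b))) * g b"
      by (metis complex_eq)
    show ?thesis unfolding pe by (simp add: algebra_simps)
  qed
  ultimately show ?thesis by simp
qed

lemma weak_from_char:
  assumes r: "r > 0" and U: "ball x0 r \<subseteq> U"
    and ch: "\<And>x. x \<in> U \<Longrightarrow> good (\<lambda>b. iexp (x \<bullet> b))"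
    and f: "continuous_on UNIV (f :: 'a \<Rightarrow> real)"
  shows "(\<lambda>n. integral\<^sup>L (G n) f) \<longlonglongrightarrow> integral\<^sup>L Gs f"
proof -
  have P1: "P x0 (\<lambda>b. 1)"
    unfolding P_def using r U ch by (intro conjI exI[of _ r]) auto
  have "good (\<lambda>b. complex_of_real (f b))"
  proof (rule good_closure)
    show "continuous_on UNIV (\<lambda>b. complex_of_real (f b))" by (intro continuous_intros f)
    fix e :: real assume e: "e > 0"
    have "continuous_on (cball 0 R) (\<lambda>b. complex_of_real (f b) * iexp (- (x0 \<bullet> b)))"
      by (intro continuous_intros continuous_on_subset[OF f]) auto
    then obtain p where p: "polynomial_function p"
      "\<forall>b\<in>cball 0 R. norm (complex_of_real (f b) * iexp (- (x0 \<bullet> b)) - p b) < e"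
      using Stone_Weierstrass_polynomial_function[OF compact_cball _ e] by blast
    have "P x0 (\<lambda>b. p b * 1)" by (rule P_poly[OF p(1) P1])
    then obtain \<rho> where "\<rho> > 0" "\<forall>x\<in>ball x0 \<rho>. good (\<lambda>b. p b * 1 * iexp (x \<bullet> b))"
      by (auto simp: P_def)
    then have hg: "good (\<lambda>b. p b * iexp (x0 \<bullet> b))" by auto
    have hc: "continuous_on UNIV (\<lambda>b. p b * iexp (x0 \<bullet> b))"
      by (intro continuous_intros continuous_on_polymonial_function[OF p(1)])
    have "norm (complex_of_real (f b) - p b * iexp (x0 \<bullet> b)) \<le> e" if b: "b \<in> cball 0 R" for b
    proof -
      have "complex_of_real (f b) - p b * iexp (x0 \<bullet> b) =
          (complex_of_real (f b) * iexp (- (x0 \<bullet> b)) - p b) * iexp (x0 \<bullet> b)"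
        by (simp add: algebra_simps exp_minus_inverse exp_minus)
      then have "norm (complex_of_real (f b) - p b * iexp (x0 \<bullet> b)) =
          norm (complex_of_real (f b) * iexp (- (x0 \<bullet> b)) - p b)"
        by (simp add: norm_mult)
      then show ?thesis using p(2) b by (metis less_imp_le)
    qed
    then show "\<exists>h. continuous_on UNIV h \<and> good h \<and> (\<forall>b\<in>cball 0 R. norm (complex_of_real (f b) - h b) \<le> e)"
      using hg hc by blast
  qed
  then have "(\<lambda>n. complex_of_real (integral\<^sup>L (G n) f)) \<longlonglongrightarrow> complex_of_real (integral\<^sup>L Gs f)"
    by (simp add: good_def)
  then show ?thesis by (simp add: tendsto_of_real_iff)
qed

end


lemma std_normal_prob: "prob_space std_normal"
  unfolding std_normal_def by (rule prob_space_normal_density) simp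

lemma sets_std_normal: "sets std_normal = sets borel"
  by (simp add: std_normal_def)

lemma gauss_cos: "(\<integral>z. cos (a + t * z) \<partial>std_normal) = exp (- (t^2) / 2) * cos a"
proof -
  interpret N: prob_space std_normal by (rule std_normal_prob)
  have spN: "space std_normal = UNIV" using sets_eq_imp_space_eq[OF sets_std_normal] by simp
  have cont: "continuous_on UNIV (\<lambda>z. iexp (a + t * z))" by (intro continuous_intros)
  have meas: "(\<lambda>z. iexp (a + t * z)) \<in> borel_measurable std_normal"
    using borel_measurable_continuous_onI[OF cont] measurable_cong_sets[OF sets_std_normal refl] by blast
  have int: "integrable std_normal (\<lambda>z. iexp (a + t * z))"
    by (rule N.integrable_const_bound[where B=1]) (simp, rule meas)
  have "(\<integral>z. cos (a + t * z) \<partial>std_normal) = (\<integral>z. Re (iexp (a + t * z)) \<partial>std_normal)"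
    by (simp add: Re_exp)
  also have "\<dots> = Re (CLINT z|std_normal. iexp (a + t * z))"
    by (rule integral_Re[OF int])
  also have "(CLINT z|std_normal. iexp (a + t * z)) = (CLINT z|std_normal. iexp a * iexp (t * z))"
    by (simp add: distrib_left exp_add)
  also have "\<dots> = iexp a * (CLINT z|std_normal. iexp (t * z))" by simp
  also have "(CLINT z|std_normal. iexp (t * z)) = char std_normal_distribution t"
    by (simp add: char_def std_normal_def)
  also have "\<dots> = complex_of_real (exp (- (t^2) / 2))" by (simp add: char_std_normal_distribution)
  finally show ?thesis by (simp add: Re_exp)
qed


lemma int_bdd_cont:
  fixes f :: "'b::topological_space \<Rightarrow> 'c::{banach, second_countable_topology}"
  assumes "prob_space M" "sets M = sets borel" "continuous_on UNIV f" "\<And>x. norm (f x) \<le> B"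
  shows "integrable M f"
proof -
  interpret prob_space M by fact
  have "f \<in> borel_measurable M"
    using borel_measurable_continuous_onI[OF assms(3)] measurable_cong_sets[OF assms(2) refl] by blast
  then show ?thesis by (intro integrable_const_bound[where B=B]) (use assms(4) in auto)
qed

lemma sets_pair_borel:
  assumes "sets M1 = sets (borel :: 'b::second_countable_topology measure)"
    "sets M2 = sets (borel :: 'c::second_countable_topology measure)"
  shows "sets (M1 \<Otimes>\<^sub>M M2) = sets (borel :: ('b \<times> 'c) measure)"
proof -
  have "sets (M1 \<Otimes>\<^sub>M M2) = sets (borel \<Otimes>\<^sub>M (borel :: 'c measure))"
    by (rule sets_pair_measure_cong[OF assms])
  then show ?thesis by (simp only: borel_prod)
qed

definition lmT :: "real \<Rightarrow> ('a::euclidean_space \<times> 'a) \<times> real \<Rightarrow> 'a \<times> real" where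
  "lmT \<sigma> w = (fst (fst w), fst (fst w) \<bullet> snd (fst w) + \<sigma> * snd w)"

lemma lin_model_alt: "lin_model \<sigma> G \<mu> = distr ((\<mu> \<Otimes>\<^sub>M G) \<Otimes>\<^sub>M std_normal) borel (lmT \<sigma>)"
proof -
  have eq: "(\<lambda>((x, b), z). (x, x \<bullet> b + \<sigma> * z)) = lmT \<sigma>"
    by (auto simp: lmT_def fun_eq_iff)
  show ?thesis by (simp only: lin_model_def eq)
qed

lemma lmT_cont: "continuous_on UNIV (lmT \<sigma>)"
  unfolding lmT_def by (intro continuous_intros)

lemma lin_model_basic:
  fixes \<mu> G :: "'a::euclidean_space measure"
  assumes mu: "prob_space \<mu>" and smu: "sets \<mu> = sets borel"
    and G: "prob_space G" and sG: "sets G = sets borel"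
  shows "prob_space (lin_model \<sigma> G \<mu>)" "sets (lin_model \<sigma> G \<mu>) = sets borel"
    "lmT \<sigma> \<in> measurable ((\<mu> \<Otimes>\<^sub>M G) \<Otimes>\<^sub>M std_normal) borel"
    "sets ((\<mu> \<Otimes>\<^sub>M G) \<Otimes>\<^sub>M std_normal) = sets borel"
proof -
  show s2: "sets ((\<mu> \<Otimes>\<^sub>M G) \<Otimes>\<^sub>M std_normal) = sets borel"
    by (rule sets_pair_borel[OF sets_pair_borel[OF smu sG] sets_std_normal])
  show Tm: "lmT \<sigma> \<in> measurable ((\<mu> \<Otimes>\<^sub>M G) \<Otimes>\<^sub>M std_normal) borel"
    using borel_measurable_continuous_onI[OF lmT_cont] measurable_cong_sets[OF s2 refl] by blast
  have P: "prob_space ((\<mu> \<Otimes>\<^sub>M G) \<Otimes>\<^sub>M std_normal)"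
    by (intro prob_space_pair mu G std_normal_prob)
  show "prob_space (lin_model \<sigma> G \<mu>)"
    unfolding lin_model_alt by (rule prob_space.prob_space_distr[OF P Tm])
  show "sets (lin_model \<sigma> G \<mu>) = sets borel"
    unfolding lin_model_alt by simp
qed

lemma lin_model_integral:
  fixes \<mu> G :: "'a::euclidean_space measure" and \<phi> :: "'a \<Rightarrow> real"
  assumes mu: "prob_space \<mu>" and smu: "sets \<mu> = sets borel"
    and G: "prob_space G" and sG: "sets G = sets borel"
    and phic: "continuous_on UNIV \<phi>" and phib: "\<And>x. \<bar>\<phi> x\<bar> \<le> 1"
  shows "integral\<^sup>L (lin_model \<sigma> G \<mu>) (\<lambda>p. \<phi> (fst p) * cos (snd p + \<theta>)) =
     exp (- (\<sigma>^2) / 2) * (\<integral>x. \<phi> x * (\<integral>b. cos (x \<bullet> b + \<theta>) \<partial>G) \<partial>\<mu>)"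
proof -
  note B3 = lin_model_basic(3)[OF mu smu G sG, of \<sigma>]
  note B4 = lin_model_basic(4)[OF mu smu G sG]
  interpret PM: prob_space "\<mu> \<Otimes>\<^sub>M G" by (rule prob_space_pair[OF mu G])
  interpret N: prob_space std_normal by (rule std_normal_prob)
  interpret MU: prob_space \<mu> by (rule mu)
  interpret GG: prob_space G by (rule G)
  interpret PN: pair_sigma_finite "\<mu> \<Otimes>\<^sub>M G" std_normal
    by (intro pair_sigma_finite.intro PM.sigma_finite_measure_axioms N.sigma_finite_measure_axioms)
  interpret MG: pair_sigma_finite \<mu> G
    by (intro pair_sigma_finite.intro MU.sigma_finite_measure_axioms GG.sigma_finite_measure_axioms)
  have sPM: "sets (\<mu> \<Otimes>\<^sub>M G) = sets borel" by (rule sets_pair_borel[OF smu sG])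
  define F where "F = (\<lambda>p::'a \<times> real. \<phi> (fst p) * cos (snd p + \<theta>))"
  have Fc: "continuous_on UNIV F" unfolding F_def by (intro continuous_intros continuous_on_compose2[OF phic]) auto
  have Fm: "F \<in> borel_measurable borel" by (rule borel_measurable_continuous_onI[OF Fc])
  have "integral\<^sup>L (lin_model \<sigma> G \<mu>) F = integral\<^sup>L ((\<mu> \<Otimes>\<^sub>M G) \<Otimes>\<^sub>M std_normal) (\<lambda>w. F (lmT \<sigma> w))"
    unfolding lin_model_alt by (rule integral_distr[OF B3 Fm])
  also have "\<dots> = (\<integral>w1. (\<integral>z. F (lmT \<sigma> (w1, z)) \<partial>std_normal) \<partial>(\<mu> \<Otimes>\<^sub>M G))"
  proof (rule PN.integral_fst'[symmetric])
    show "integrable ((\<mu> \<Otimes>\<^sub>M G) \<Otimes>\<^sub>M std_normal) (\<lambda>w. F (lmT \<sigma> w))"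
    proof (rule int_bdd_cont[OF _ B4])
      show "prob_space ((\<mu> \<Otimes>\<^sub>M G) \<Otimes>\<^sub>M std_normal)" by (intro prob_space_pair mu G std_normal_prob)
      show "continuous_on UNIV (\<lambda>w. F (lmT \<sigma> w))" by (rule continuous_on_compose2[OF Fc lmT_cont]) auto
      show "norm (F (lmT \<sigma> w)) \<le> 1" for w
        unfolding F_def using phib[of "fst (lmT \<sigma> w)"] by (simp add: abs_mult mult_le_one)
    qed
  qed
  also have "\<dots> = (\<integral>w1. exp (- (\<sigma>^2) / 2) * (\<phi> (fst w1) * cos (fst w1 \<bullet> snd w1 + \<theta>)) \<partial>(\<mu> \<Otimes>\<^sub>M G))"
  proof (rule Bochner_Integration.integral_cong[OF refl])
    fix w1 :: "'a \<times> 'a"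
    have "(\<integral>z. F (lmT \<sigma> (w1, z)) \<partial>std_normal) = (\<integral>z. \<phi> (fst w1) * cos ((fst w1 \<bullet> snd w1 + \<theta>) + \<sigma> * z) \<partial>std_normal)"
      by (simp add: F_def lmT_def algebra_simps)
    also have "\<dots> = \<phi> (fst w1) * (\<integral>z. cos ((fst w1 \<bullet> snd w1 + \<theta>) + \<sigma> * z) \<partial>std_normal)"
      by (rule integral_mult_right_zero)
    also have "\<dots> = exp (- (\<sigma>^2) / 2) * (\<phi> (fst w1) * cos (fst w1 \<bullet> snd w1 + \<theta>))"
      by (simp add: gauss_cos)
    finally show "(\<integral>z. F (lmT \<sigma> (w1, z)) \<partial>std_normal) = exp (- (\<sigma>^2) / 2) * (\<phi> (fst w1) * cos (fst w1 \<bullet> snd w1 + \<theta>))" .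
  qed
  also have "\<dots> = exp (- (\<sigma>^2) / 2) * (\<integral>w1. \<phi> (fst w1) * cos (fst w1 \<bullet> snd w1 + \<theta>) \<partial>(\<mu> \<Otimes>\<^sub>M G))"
    by (rule integral_mult_right_zero)
  also have "(\<integral>w1. \<phi> (fst w1) * cos (fst w1 \<bullet> snd w1 + \<theta>) \<partial>(\<mu> \<Otimes>\<^sub>M G)) =
      (\<integral>x. (\<integral>b. \<phi> (fst (x, b)) * cos (fst (x, b) \<bullet> snd (x, b) + \<theta>) \<partial>G) \<partial>\<mu>)"
  proof (rule MG.integral_fst'[symmetric])
    show "integrable (\<mu> \<Otimes>\<^sub>M G) (\<lambda>w1. \<phi> (fst w1) * cos (fst w1 \<bullet> snd w1 + \<theta>))"
    proof (rule int_bdd_cont[OF _ sPM])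
      show "prob_space (\<mu> \<Otimes>\<^sub>M G)" by (intro prob_space_pair mu G)
      show "continuous_on UNIV (\<lambda>w1::'a\<times>'a. \<phi> (fst w1) * cos (fst w1 \<bullet> snd w1 + \<theta>))"
        by (intro continuous_intros continuous_on_compose2[OF phic]) auto
      show "norm (\<phi> (fst w1) * cos (fst w1 \<bullet> snd w1 + \<theta>)) \<le> 1" for w1 :: "'a \<times> 'a"
        using phib[of "fst w1"] by (simp add: abs_mult mult_le_one)
    qed
  qed
  also have "\<dots> = (\<integral>x. \<phi> x * (\<integral>b. cos (x \<bullet> b + \<theta>) \<partial>G) \<partial>\<mu>)"
    by (simp add: integral_mult_right_zero)
  finally show ?thesis by (simp add: F_def)
qed


lemma cos_lip: "\<bar>cos u - cos v\<bar> \<le> \<bar>u - v\<bar>" for u v :: real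
proof -
  have "\<bar>cos u - cos v\<bar> = 2 * \<bar>sin ((u + v) / 2)\<bar> * \<bar>sin ((v - u) / 2)\<bar>"
    by (simp add: cos_diff_cos abs_mult)
  also have "\<dots> \<le> 2 * 1 * \<bar>(v - u) / 2\<bar>"
    by (intro mult_mono abs_sin_x_le_abs_x) auto
  finally show ?thesis by simp
qed

definition Hf :: "'a::euclidean_space measure \<Rightarrow> real \<Rightarrow> 'a \<Rightarrow> real" where
  "Hf M \<theta> x = (\<integral>b. cos (x \<bullet> b + \<theta>) \<partial>M)"

lemma Hf_facts:
  fixes M :: "'a::euclidean_space measure"
  assumes M: "prob_space M" and sM: "sets M = sets borel" and AE: "AE b in M. b \<in> cball 0 R"
    and R: "R \<ge> 0"
  shows "\<bar>Hf M \<theta> x - Hf M \<theta> y\<bar> \<le> R * dist x y" "\<bar>Hf M \<theta> x\<bar> \<le> 1" "continuous_on UNIV (Hf M \<theta>)"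
proof -
  interpret prob_space M by fact
  have int: "integrable M (\<lambda>b. cos (z \<bullet> b + \<theta>))" for z
    by (rule int_bdd_cont[OF M sM, where B=1]) (auto intro!: continuous_intros)
  show lip: "\<bar>Hf M \<theta> x - Hf M \<theta> y\<bar> \<le> R * dist x y" for x y
  proof -
    have "norm (Hf M \<theta> x - Hf M \<theta> y) \<le> R * dist x y"
      unfolding Hf_def
    proof (rule int_close[OF M int int])
      show "AE b in M. norm (cos (x \<bullet> b + \<theta>) - cos (y \<bullet> b + \<theta>)) \<le> R * dist x y"
        using AE
      proof eventually_elim
        case (elim b)
        have "\<bar>cos (x \<bullet> b + \<theta>) - cos (y \<bullet> b + \<theta>)\<bar> \<le> \<bar>(x \<bullet> b + \<theta>) - (y \<bullet> b + \<theta>)\<bar>" by (rule cos_lip)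
        also have "\<dots> = \<bar>(x - y) \<bullet> b\<bar>" by (simp add: inner_diff_left)
        also have "\<dots> \<le> norm (x - y) * norm b" by (rule Cauchy_Schwarz_ineq2)
        also have "\<dots> \<le> norm (x - y) * R" using elim by (intro mult_left_mono) auto
        finally show ?case by (simp add: dist_norm mult.commute)
      qed
    qed
    then show ?thesis by simp
  qed
  show "\<bar>Hf M \<theta> x\<bar> \<le> 1" for x
  proof -
    have "norm (Hf M \<theta> x) \<le> (\<integral>b. norm (cos (x \<bullet> b + \<theta>)) \<partial>M)" unfolding Hf_def by (rule integral_norm_bound)
    also have "\<dots> \<le> (\<integral>b. 1 \<partial>M)" using int by (intro Bochner_Integration.integral_mono) auto
    finally show ?thesis by (simp add: prob_space)
  qed
  have "R-lipschitz_on UNIV (Hf M \<theta>)"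
    using R lip by (auto simp: lipschitz_on_def dist_real_def)
  then show "continuous_on UNIV (Hf M \<theta>)" by (rule lipschitz_on_continuous_on)
qed

definition bump :: "'a::metric_space \<Rightarrow> real \<Rightarrow> 'a \<Rightarrow> real" where
  "bump x0 \<delta> x = max 0 (1 - dist x x0 / \<delta>)"

lemma bump_facts:
  assumes d: "\<delta> > 0"
  shows "continuous_on UNIV (bump pt \<delta>)" "0 \<le> bump pt \<delta> x" "bump pt \<delta> x \<le> 1"
    "bump pt \<delta> x - bump pt \<delta> y \<le> (1 / \<delta>) * dist x y"
    "bump pt \<delta> x \<noteq> 0 \<Longrightarrow> dist x pt < \<delta>"
    "dist x pt < \<delta> / 2 \<Longrightarrow> bump pt \<delta> x \<ge> 1/2"
proof -
  have "continuous_on UNIV (\<lambda>x. dist x pt)" by (intro continuous_intros)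
  then show "continuous_on UNIV (bump pt \<delta>)" unfolding bump_def using d by (intro continuous_intros) auto
  show "0 \<le> bump pt \<delta> x" by (simp add: bump_def)
  show "bump pt \<delta> x \<le> 1" using d by (simp add: bump_def)
  show "bump pt \<delta> x - bump pt \<delta> y \<le> (1 / \<delta>) * dist x y"
  proof -
    have t: "dist y pt - dist x pt \<le> dist x y" using dist_triangle3[of y pt x] by (simp add: dist_commute)
    have "1 - dist x pt / \<delta> - (1 - dist y pt / \<delta>) = (dist y pt - dist x pt) / \<delta>"
      using d by (simp add: field_simps)
    also have "\<dots> \<le> dist x y / \<delta>" using t d by (simp add: divide_right_mono)
    finally have a: "1 - dist x pt / \<delta> - (1 - dist y pt / \<delta>) \<le> dist x y / \<delta>" .
    have b: "0 \<le> dist x y / \<delta>" using d by simp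
    show ?thesis unfolding bump_def using a b by (simp add: max_def)
  qed
  show "bump pt \<delta> x \<noteq> 0 \<Longrightarrow> dist x pt < \<delta>"
  proof -
    assume nz: "bump pt \<delta> x \<noteq> 0"
    have "\<not> (1 - dist x pt / \<delta> \<le> 0)"
    proof
      assume "1 - dist x pt / \<delta> \<le> 0"
      then have "bump pt \<delta> x = 0" unfolding bump_def by (simp add: max_absorb1)
      with nz show False by simp
    qed
    then have "dist x pt / \<delta> < 1" by simp
    then show ?thesis using d by (simp add: divide_less_eq)
  qed
  show "dist x pt < \<delta> / 2 \<Longrightarrow> bump pt \<delta> x \<ge> 1/2"
  proof -
    assume "dist x pt < \<delta> / 2"
    then have "dist x pt / \<delta> < 1/2" using d by (simp add: field_simps)
    then have "1 - dist x pt / \<delta> \<ge> 1/2" by linarith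
    then show ?thesis unfolding bump_def by (rule order_trans) simp
  qed
qed


lemma bump_int_est:
  fixes \<mu> :: "'a::euclidean_space measure" and H :: "'a \<Rightarrow> real"
  assumes mu: "prob_space \<mu>" and smu: "sets \<mu> = sets borel" and d: "\<delta> > 0" and R: "R \<ge> 0"
    and Hl: "\<And>x y. \<bar>H x - H y\<bar> \<le> R * dist x y" and Hb: "\<And>x. \<bar>H x\<bar> \<le> 1"
    and Hc: "continuous_on UNIV H"
  shows "\<bar>(\<integral>x. bump x0 \<delta> x * H x \<partial>\<mu>) - (\<integral>x. bump x0 \<delta> x \<partial>\<mu>) * H x0\<bar> \<le> R * \<delta> * (\<integral>x. bump x0 \<delta> x \<partial>\<mu>)"
proof -
  interpret prob_space \<mu> by fact
  note bf = bump_facts[OF d, where pt=x0]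
  have i1: "integrable \<mu> (\<lambda>x. bump x0 \<delta> x * H x)"
    by (rule int_bdd_cont[OF mu smu, where B=1]) (use bf Hb Hc in \<open>auto intro!: continuous_intros simp: abs_mult mult_le_one\<close>)
  have i2: "integrable \<mu> (bump x0 \<delta>)"
    by (rule int_bdd_cont[OF mu smu, where B=1]) (use bf in auto)
  have "(\<integral>x. bump x0 \<delta> x * H x \<partial>\<mu>) - (\<integral>x. bump x0 \<delta> x \<partial>\<mu>) * H x0 =
      (\<integral>x. bump x0 \<delta> x * H x - bump x0 \<delta> x * H x0 \<partial>\<mu>)"
    using i1 i2 by simp
  also have "\<bar>\<dots>\<bar> \<le> (\<integral>x. \<bar>bump x0 \<delta> x * H x - bump x0 \<delta> x * H x0\<bar> \<partial>\<mu>)"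
    using integral_norm_bound[of \<mu> "\<lambda>x. bump x0 \<delta> x * H x - bump x0 \<delta> x * H x0"] by simp
  also have "\<dots> \<le> (\<integral>x. bump x0 \<delta> x * (R * \<delta>) \<partial>\<mu>)"
  proof (rule Bochner_Integration.integral_mono)
    show "integrable \<mu> (\<lambda>x. \<bar>bump x0 \<delta> x * H x - bump x0 \<delta> x * H x0\<bar>)" using i1 i2 by simp
    show "integrable \<mu> (\<lambda>x. bump x0 \<delta> x * (R * \<delta>))" using i2 by simp
    fix x
    show "\<bar>bump x0 \<delta> x * H x - bump x0 \<delta> x * H x0\<bar> \<le> bump x0 \<delta> x * (R * \<delta>)"
    proof (cases "bump x0 \<delta> x = 0")
      case True then show ?thesis by simp
    next
      case False
      then have "dist x x0 < \<delta>" by (rule bf(5))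
      then have "\<bar>H x - H x0\<bar> \<le> R * \<delta>" using Hl[of x x0] R
        by (meson less_imp_le mult_left_mono order_trans)
      then have "bump x0 \<delta> x * \<bar>H x - H x0\<bar> \<le> bump x0 \<delta> x * (R * \<delta>)"
        using bf(2) by (rule mult_left_mono)
      then show ?thesis by (simp add: abs_mult right_diff_distrib[symmetric] bf(2))
    qed
  qed
  also have "\<dots> = R * \<delta> * (\<integral>x. bump x0 \<delta> x \<partial>\<mu>)" by (simp add: mult.commute)
  finally show ?thesis .
qed

lemma bump_int_pos:
  fixes \<mu> :: "'a::euclidean_space measure"
  assumes mu: "prob_space \<mu>" and smu: "sets \<mu> = sets borel" and d: "\<delta> > 0"
    and pos: "measure \<mu> (ball x0 (\<delta>/2)) > 0"
  shows "(\<integral>x. bump x0 \<delta> x \<partial>\<mu>) > 0"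
proof -
  interpret prob_space \<mu> by fact
  note bf = bump_facts[OF d, where pt=x0]
  have sp: "space \<mu> = UNIV" using sets_eq_imp_space_eq[OF smu] by simp
  have bs: "ball x0 (\<delta>/2) \<in> sets \<mu>" using smu by simp
  have i2: "integrable \<mu> (bump x0 \<delta>)"
    by (rule int_bdd_cont[OF mu smu, where B=1]) (use bf in auto)
  have "0 < measure \<mu> (ball x0 (\<delta>/2)) / 2" using pos by simp
  also have "measure \<mu> (ball x0 (\<delta>/2)) / 2 = (\<integral>x. indicator (ball x0 (\<delta>/2)) x / 2 \<partial>\<mu>)"
    using sp by simp
  also have "\<dots> \<le> (\<integral>x. bump x0 \<delta> x \<partial>\<mu>)"
  proof (rule Bochner_Integration.integral_mono)
    show "integrable \<mu> (\<lambda>x. indicator (ball x0 (\<delta> / 2)) x / 2 :: real)"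
      using prob_ind_int[OF mu bs] by simp
    show "integrable \<mu> (bump x0 \<delta>)" by (rule i2)
    fix x show "indicator (ball x0 (\<delta> / 2)) x / 2 \<le> bump x0 \<delta> x"
      using bf(2)[where x=x] bf(6)[where x=x] by (auto simp: indicator_def dist_commute)
  qed
  finally show ?thesis .
qed

lemma pointwise_from_bumps:
  fixes \<mu> :: "'a::euclidean_space measure" and H :: "nat \<Rightarrow> 'a \<Rightarrow> real" and Hs :: "'a \<Rightarrow> real"
  assumes mu: "prob_space \<mu>" and smu: "sets \<mu> = sets borel"
    and pos: "\<And>\<delta>. \<delta> > 0 \<Longrightarrow> measure \<mu> (ball x0 \<delta>) > 0" and R: "R \<ge> 0"
    and Hl: "\<And>n x y. \<bar>H n x - H n y\<bar> \<le> R * dist x y" and Hb: "\<And>n x. \<bar>H n x\<bar> \<le> 1"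
    and Hc: "\<And>n. continuous_on UNIV (H n)"
    and Hsl: "\<And>x y. \<bar>Hs x - Hs y\<bar> \<le> R * dist x y" and Hsb: "\<And>x. \<bar>Hs x\<bar> \<le> 1"
    and Hsc: "continuous_on UNIV Hs"
    and conv: "\<And>\<delta>. \<delta> > 0 \<Longrightarrow> (\<lambda>n. \<integral>x. bump x0 \<delta> x * H n x \<partial>\<mu>) \<longlonglongrightarrow> (\<integral>x. bump x0 \<delta> x * Hs x \<partial>\<mu>)"
  shows "(\<lambda>n. H n x0) \<longlonglongrightarrow> Hs x0"
proof (rule tendstoI)
  fix \<epsilon> :: real assume \<epsilon>: "\<epsilon> > 0"
  define \<delta> where "\<delta> = \<epsilon> / (4 * (R + 1))"
  have d: "\<delta> > 0" using \<epsilon> R by (simp add: \<delta>_def)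
  have Rd: "2 * R * \<delta> < \<epsilon> / 2"
  proof -
    have "2 * R * \<delta> = (\<epsilon> / 2) * (R / (R + 1))" using R by (simp add: \<delta>_def field_simps)
    also have "\<dots> < (\<epsilon> / 2) * 1" using \<epsilon> R by (intro mult_strict_left_mono) auto
    finally show ?thesis by simp
  qed
  define c where "c = (\<integral>x. bump x0 \<delta> x \<partial>\<mu>)"
  have c: "c > 0" unfolding c_def by (rule bump_int_pos[OF mu smu d pos]) (use d in simp)
  have "\<forall>\<^sub>F n in sequentially. dist (\<integral>x. bump x0 \<delta> x * H n x \<partial>\<mu>) (\<integral>x. bump x0 \<delta> x * Hs x \<partial>\<mu>) < c * \<epsilon> / 2"
    using conv[OF d] c \<epsilon> by (intro tendstoD) auto
  then show "\<forall>\<^sub>F n in sequentially. dist (H n x0) (Hs x0) < \<epsilon>"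
  proof eventually_elim
    case (elim n)
    have e1: "\<bar>(\<integral>x. bump x0 \<delta> x * H n x \<partial>\<mu>) - c * H n x0\<bar> \<le> R * \<delta> * c"
      unfolding c_def by (rule bump_int_est[OF mu smu d R Hl Hb Hc])
    have e2: "\<bar>(\<integral>x. bump x0 \<delta> x * Hs x \<partial>\<mu>) - c * Hs x0\<bar> \<le> R * \<delta> * c"
      unfolding c_def by (rule bump_int_est[OF mu smu d R Hsl Hsb Hsc])
    have "c * \<bar>H n x0 - Hs x0\<bar> = \<bar>c * (H n x0 - Hs x0)\<bar>" using c by (simp add: abs_mult)
    also have "\<dots> = \<bar>c * H n x0 - c * Hs x0\<bar>" by (simp add: right_diff_distrib)
    also have "\<dots> \<le> R * \<delta> * c + c * \<epsilon> / 2 + R * \<delta> * c"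
    proof -
      have tri: "\<bar>u - v\<bar> \<le> \<bar>a - u\<bar> + \<bar>a - b\<bar> + \<bar>b - v\<bar>" for a b u v :: real by arith
      have "\<bar>(\<integral>x. bump x0 \<delta> x * H n x \<partial>\<mu>) - (\<integral>x. bump x0 \<delta> x * Hs x \<partial>\<mu>)\<bar> < c * \<epsilon> / 2"
        using elim by (simp add: dist_real_def)
      then show ?thesis using e1 e2 tri[of "c * H n x0" "c * Hs x0" "\<integral>x. bump x0 \<delta> x * H n x \<partial>\<mu>" "\<integral>x. bump x0 \<delta> x * Hs x \<partial>\<mu>"]
        by linarith
    qed
    also have "\<dots> = c * (2 * R * \<delta> + \<epsilon> / 2)" by (simp add: algebra_simps)
    also have "\<dots> < c * \<epsilon>" using c Rd by simp
    finally have "\<bar>H n x0 - Hs x0\<bar> < \<epsilon>" using c by simp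
    then show ?case by (simp add: dist_real_def)
  qed
qed


lemma F_lip:
  fixes \<phi> :: "'a::metric_space \<Rightarrow> real"
  assumes phil: "\<And>x y. \<bar>\<phi> x - \<phi> y\<bar> \<le> K * dist x y" and phib: "\<And>x. \<bar>\<phi> x\<bar> \<le> 1" and K: "K \<ge> 0"
  shows "(\<phi> (fst p) * cos (snd p + \<theta>) + 1) / 2 - (\<phi> (fst q) * cos (snd q + \<theta>) + 1) / 2
     \<le> ((K + 1) / 2) * dist p q"
proof -
  have d1: "dist (fst p) (fst q) \<le> dist p q" by (rule dist_fst_le)
  have d2: "dist (snd p) (snd q) \<le> dist p q" by (rule dist_snd_le)
  have "\<phi> (fst p) * cos (snd p + \<theta>) - \<phi> (fst q) * cos (snd q + \<theta>) =
     (\<phi> (fst p) - \<phi> (fst q)) * cos (snd p + \<theta>) + \<phi> (fst q) * (cos (snd p + \<theta>) - cos (snd q + \<theta>))"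
    by (simp add: algebra_simps)
  also have "\<dots> \<le> \<bar>(\<phi> (fst p) - \<phi> (fst q)) * cos (snd p + \<theta>)\<bar> + \<bar>\<phi> (fst q) * (cos (snd p + \<theta>) - cos (snd q + \<theta>))\<bar>"
    by linarith
  also have "\<bar>(\<phi> (fst p) - \<phi> (fst q)) * cos (snd p + \<theta>)\<bar> \<le> K * dist p q"
  proof -
    have "\<bar>(\<phi> (fst p) - \<phi> (fst q)) * cos (snd p + \<theta>)\<bar> \<le> \<bar>\<phi> (fst p) - \<phi> (fst q)\<bar> * 1"
      unfolding abs_mult by (intro mult_left_mono) auto
    also have "\<dots> \<le> K * dist (fst p) (fst q)" using phil by simp
    also have "\<dots> \<le> K * dist p q" using K d1 by (rule mult_left_mono[rotated])
    finally show ?thesis .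
  qed
  also have "\<bar>\<phi> (fst q) * (cos (snd p + \<theta>) - cos (snd q + \<theta>))\<bar> \<le> dist p q"
  proof -
    have "\<bar>\<phi> (fst q) * (cos (snd p + \<theta>) - cos (snd q + \<theta>))\<bar> \<le> 1 * \<bar>cos (snd p + \<theta>) - cos (snd q + \<theta>)\<bar>"
      unfolding abs_mult by (intro mult_right_mono phib) auto
    also have "\<dots> \<le> \<bar>(snd p + \<theta>) - (snd q + \<theta>)\<bar>" using cos_lip[of "snd p + \<theta>" "snd q + \<theta>"] by simp
    also have "\<dots> = dist (snd p) (snd q)" by (simp add: dist_real_def)
    finally show ?thesis using d2 by simp
  qed
  finally have "\<phi> (fst p) * cos (snd p + \<theta>) - \<phi> (fst q) * cos (snd q + \<theta>) \<le> (K + 1) * dist p q"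
    by (simp add: algebra_simps)
  then show ?thesis by (simp add: field_simps)
qed

lemma bump_lip:
  assumes d: "\<delta> > 0"
  shows "\<bar>bump x0 \<delta> x - bump x0 \<delta> y\<bar> \<le> (1 / \<delta>) * dist x y"
  using bump_facts(4)[OF d, where pt=x0 and x=x and y=y] bump_facts(4)[OF d, where pt=x0 and x=y and y=x]
  by (simp add: dist_commute abs_le_iff)

lemma char_conv:
  fixes \<mu> Gs :: "'a::euclidean_space measure" and G :: "nat \<Rightarrow> 'a measure"
  assumes mu: "prob_space \<mu>" and smu: "sets \<mu> = sets borel"
    and G: "\<And>n. prob_space (G n)" and sG: "\<And>n. sets (G n) = sets borel"
    and Gs: "prob_space Gs" and sGs: "sets Gs = sets borel"
    and AEG: "\<And>n. AE b in G n. b \<in> cball 0 R" and AEGs: "AE b in Gs. b \<in> cball 0 R"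
    and R: "R \<ge> 0"
    and conv: "(\<lambda>n. lp_dist (lin_model \<sigma> (G n) \<mu>) (lin_model \<sigma> Gs \<mu>)) \<longlonglongrightarrow> 0"
    and pos: "\<And>\<delta>. \<delta> > 0 \<Longrightarrow> measure \<mu> (ball x0 \<delta>) > 0"
  shows "(\<lambda>n. Hf (G n) \<theta> x0) \<longlonglongrightarrow> Hf Gs \<theta> x0"
proof (rule pointwise_from_bumps[OF mu smu pos R])
  show "\<bar>Hf (G n) \<theta> x - Hf (G n) \<theta> y\<bar> \<le> R * dist x y" for n x y by (rule Hf_facts(1)[OF G sG AEG R])
  show "\<bar>Hf (G n) \<theta> x\<bar> \<le> 1" for n x by (rule Hf_facts(2)[OF G sG AEG R])
  show "continuous_on UNIV (Hf (G n) \<theta>)" for n by (rule Hf_facts(3)[OF G sG AEG R])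
  show "\<bar>Hf Gs \<theta> x - Hf Gs \<theta> y\<bar> \<le> R * dist x y" for x y by (rule Hf_facts(1)[OF Gs sGs AEGs R])
  show "\<bar>Hf Gs \<theta> x\<bar> \<le> 1" for x by (rule Hf_facts(2)[OF Gs sGs AEGs R])
  show "continuous_on UNIV (Hf Gs \<theta>)" by (rule Hf_facts(3)[OF Gs sGs AEGs R])
  fix \<delta> :: real assume d: "\<delta> > 0"
  note bf = bump_facts[OF d, where pt=x0]
  define \<phi> where "\<phi> = bump x0 \<delta>"
  have phic: "continuous_on UNIV \<phi>" unfolding \<phi>_def by (rule bf(1))
  have phib: "\<bar>\<phi> x\<bar> \<le> 1" for x using bf(2)[where x=x] bf(3)[where x=x] by (simp add: \<phi>_def)
  have phil: "\<bar>\<phi> x - \<phi> y\<bar> \<le> (1/\<delta>) * dist x y" for x y unfolding \<phi>_def by (rule bump_lip[OF d])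
  define F where "F = (\<lambda>p::'a \<times> real. (\<phi> (fst p) * cos (snd p + \<theta>) + 1) / 2)"
  have Fc: "continuous_on UNIV F" unfolding F_def
    by (intro continuous_intros continuous_on_compose2[OF phic]) auto
  have F01: "0 \<le> F p \<and> F p \<le> 1" for p
  proof -
    have "\<bar>\<phi> (fst p) * cos (snd p + \<theta>)\<bar> \<le> 1 * 1" unfolding abs_mult by (intro mult_mono phib) auto
    then show ?thesis unfolding F_def by (simp add: abs_le_iff)
  qed
  have FL: "F p - F q \<le> ((1/\<delta> + 1) / 2) * dist p q" for p q
    unfolding F_def by (rule F_lip[OF phil phib]) (use d in simp)
  have "(\<lambda>n. integral\<^sup>L (lin_model \<sigma> (G n) \<mu>) F) \<longlonglongrightarrow> integral\<^sup>L (lin_model \<sigma> Gs \<mu>) F"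
  proof (rule lp_conv_integral01[OF _ _ _ _ F01 FL])
    show "prob_space (lin_model \<sigma> (G n) \<mu>)" for n by (rule lin_model_basic(1)[OF mu smu G sG])
    show "prob_space (lin_model \<sigma> Gs \<mu>)" by (rule lin_model_basic(1)[OF mu smu Gs sGs])
    show "sets (lin_model \<sigma> (G n) \<mu>) = sets borel" for n by (rule lin_model_basic(2)[OF mu smu G sG])
    show "sets (lin_model \<sigma> Gs \<mu>) = sets borel" by (rule lin_model_basic(2)[OF mu smu Gs sGs])
    show "0 \<le> (1 / \<delta> + 1) / 2" using d by simp
    show "F \<in> borel_measurable borel" by (rule borel_measurable_continuous_onI[OF Fc])
    show "(\<lambda>n. lp_dist (lin_model \<sigma> (G n) \<mu>) (lin_model \<sigma> Gs \<mu>)) \<longlonglongrightarrow> 0" by (rule conv)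
  qed
  moreover have "integral\<^sup>L (lin_model \<sigma> M \<mu>) F = (exp (- (\<sigma>^2) / 2) * (\<integral>x. \<phi> x * Hf M \<theta> x \<partial>\<mu>) + 1) / 2"
    if M: "prob_space M" "sets M = sets borel" for M
  proof -
    interpret L: prob_space "lin_model \<sigma> M \<mu>" by (rule lin_model_basic(1)[OF mu smu M])
    have sL: "sets (lin_model \<sigma> M \<mu>) = sets borel" by (rule lin_model_basic(2)[OF mu smu M])
    have i: "integrable (lin_model \<sigma> M \<mu>) (\<lambda>p. \<phi> (fst p) * cos (snd p + \<theta>))"
    proof (rule int_bdd_cont[OF _ sL, where B=1])
      show "prob_space (lin_model \<sigma> M \<mu>)" by (rule L.prob_space_axioms)
      show "continuous_on UNIV (\<lambda>p::'a\<times>real. \<phi> (fst p) * cos (snd p + \<theta>))"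
        by (intro continuous_intros continuous_on_compose2[OF phic]) auto
      show "norm (\<phi> (fst p) * cos (snd p + \<theta>)) \<le> 1" for p :: "'a \<times> real"
        unfolding real_norm_def abs_mult using phib[of "fst p"] by (intro mult_le_one) auto
    qed
    have "integral\<^sup>L (lin_model \<sigma> M \<mu>) F = (integral\<^sup>L (lin_model \<sigma> M \<mu>) (\<lambda>p. \<phi> (fst p) * cos (snd p + \<theta>)) + 1) / 2"
      unfolding F_def using i by (simp add: L.prob_space)
    also have "integral\<^sup>L (lin_model \<sigma> M \<mu>) (\<lambda>p. \<phi> (fst p) * cos (snd p + \<theta>)) =
        exp (- (\<sigma>^2) / 2) * (\<integral>x. \<phi> x * (\<integral>b. cos (x \<bullet> b + \<theta>) \<partial>M) \<partial>\<mu>)"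
      by (rule lin_model_integral[OF mu smu M phic phib])
    finally show ?thesis by (simp add: Hf_def)
  qed
  ultimately have lim: "(\<lambda>n. (exp (- (\<sigma>^2) / 2) * (\<integral>x. \<phi> x * Hf (G n) \<theta> x \<partial>\<mu>) + 1) / 2) \<longlonglongrightarrow>
      (exp (- (\<sigma>^2) / 2) * (\<integral>x. \<phi> x * Hf Gs \<theta> x \<partial>\<mu>) + 1) / 2"
    using G sG Gs sGs by simp
  define E where "E = exp (- (\<sigma>^2) / 2)"
  have E: "E > 0" by (simp add: E_def)
  have "(\<lambda>n. ((E * (\<integral>x. \<phi> x * Hf (G n) \<theta> x \<partial>\<mu>) + 1) / 2 * 2 - 1) / E) \<longlonglongrightarrow>
      ((E * (\<integral>x. \<phi> x * Hf Gs \<theta> x \<partial>\<mu>) + 1) / 2 * 2 - 1) / E"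
    by (rule tendsto_divide[OF tendsto_diff[OF tendsto_mult[OF lim[unfolded E_def[symmetric]] tendsto_const] tendsto_const] tendsto_const]) (use E in simp)
  moreover have simpE: "((E * X + 1) / 2 * 2 - 1) / E = X" for X using E by (simp add: field_simps)
  ultimately have "(\<lambda>n. \<integral>x. \<phi> x * Hf (G n) \<theta> x \<partial>\<mu>) \<longlonglongrightarrow> (\<integral>x. \<phi> x * Hf Gs \<theta> x \<partial>\<mu>)"
    by (simp only: simpE)
  then show "(\<lambda>n. \<integral>x. bump x0 \<delta> x * Hf (G n) \<theta> x \<partial>\<mu>) \<longlonglongrightarrow> (\<integral>x. bump x0 \<delta> x * Hf Gs \<theta> x \<partial>\<mu>)"
    by (simp add: \<phi>_def)
qed


lemma iexp_integral:
  fixes M :: "'a::euclidean_space measure"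
  assumes M: "prob_space M" and sM: "sets M = sets borel"
  shows "(CLINT b|M. iexp (x \<bullet> b)) = complex_of_real (Hf M 0 x) + \<i> * complex_of_real (Hf M (- (pi/2)) x)"
proof -
  have ic: "integrable M (\<lambda>b. cos (x \<bullet> b + t))" for t
    by (rule int_bdd_cont[OF M sM, where B=1]) (auto intro!: continuous_intros)
  have e: "iexp (x \<bullet> b) = complex_of_real (cos (x \<bullet> b + 0)) + \<i> * complex_of_real (cos (x \<bullet> b + - (pi/2)))" for b
  proof -
    have "cos (x \<bullet> b + - (pi/2)) = sin (x \<bullet> b)" by (simp add: cos_diff)
    then show ?thesis by (simp add: Complex_eq exp_Euler cis.ctr cos_of_real sin_of_real)
  qed
  have "(CLINT b|M. iexp (x \<bullet> b)) = (CLINT b|M. complex_of_real (cos (x \<bullet> b + 0)) + \<i> * complex_of_real (cos (x \<bullet> b + - (pi/2))))"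
    by (simp only: e)
  also have "\<dots> = (CLINT b|M. complex_of_real (cos (x \<bullet> b + 0))) + (CLINT b|M. \<i> * complex_of_real (cos (x \<bullet> b + - (pi/2))))"
  proof (rule Bochner_Integration.integral_add)
    show "integrable M (\<lambda>b. complex_of_real (cos (x \<bullet> b + 0)))"
      by (rule int_bdd_cont[OF M sM, where B=1]) (auto intro!: continuous_intros)
    show "integrable M (\<lambda>b. \<i> * complex_of_real (cos (x \<bullet> b + - (pi/2))))"
      by (rule int_bdd_cont[OF M sM, where B=1]) (auto intro!: continuous_intros simp: norm_mult)
  qed
  also have "\<dots> = complex_of_real (Hf M 0 x) + \<i> * complex_of_real (Hf M (- (pi/2)) x)"
    by (simp add: Hf_def)
  finally show ?thesis .
qed


theorem lemma6p2:
  fixes \<mu> Gstar :: "'a::euclidean_space measure"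
    and G :: "nat \<Rightarrow> 'a measure"
    and \<sigma> R :: real
  assumes mu_prob: "prob_space \<mu>" and mu_sets: "sets \<mu> = sets borel"
    and mu_supp: "\<exists>U. open U \<and> U \<noteq> {} \<and> U \<subseteq> msupport \<mu>"
    and sigma_pos: "\<sigma> > 0" and R_pos: "R > 0"
    and G_prob: "\<And>n. prob_space (G n)" and G_sets: "\<And>n. sets (G n) = sets borel"
    and G_bdd: "\<And>n. measure (G n) {\<beta>. norm \<beta> \<le> R} = 1"
    and Gs_prob: "prob_space Gstar" and Gs_sets: "sets Gstar = sets borel"
    and Gs_bdd: "measure Gstar {\<beta>. norm \<beta> \<le> R} = 1"
    and conv: "(\<lambda>n. lp_dist (lin_model \<sigma> (G n) \<mu>) (lin_model \<sigma> Gstar \<mu>)) \<longlonglongrightarrow> 0"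
  shows "(\<lambda>n. lp_dist (G n) Gstar) \<longlonglongrightarrow> 0"
proof -
  have R0: "R \<ge> 0" using R_pos by simp
  have cb: "{\<beta>::'a. norm \<beta> \<le> R} = cball 0 R" by (auto simp: dist_norm)
  have AEgen: "AE b in M. b \<in> cball 0 R" if "prob_space M" "sets M = sets borel" "measure M {\<beta>. norm \<beta> \<le> R} = 1"
    for M :: "'a measure"
  proof -
    interpret prob_space M by fact
    have ev: "cball 0 R \<in> events" using that(2) by simp
    show ?thesis using AE_in_set_eq_1[OF ev] that(3) cb by simp
  qed
  have AEG: "AE b in G n. b \<in> cball 0 R" for n by (rule AEgen[OF G_prob G_sets G_bdd])
  have AEGs: "AE b in Gstar. b \<in> cball 0 R" by (rule AEgen[OF Gs_prob Gs_sets Gs_bdd])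
  obtain U where U: "open U" "U \<noteq> {}" "U \<subseteq> msupport \<mu>" using mu_supp by blast
  obtain x0 where x0: "x0 \<in> U" using U(2) by blast
  obtain r where r: "r > 0" "ball x0 r \<subseteq> U" using U(1) x0 open_contains_ball by blast
  have pos: "measure \<mu> (ball x \<delta>) > 0" if x: "x \<in> U" and d: "\<delta> > 0" for x \<delta>
  proof -
    interpret prob_space \<mu> by (rule mu_prob)
    have "emeasure \<mu> (ball x \<delta>) > 0" using U(3) x d unfolding msupport_def by auto
    then show ?thesis by (simp add: emeasure_eq_measure)
  qed
  interpret wk G Gstar R
    by (rule wk.intro[OF G_prob G_sets Gs_prob Gs_sets AEG AEGs])
  have ch: "good (\<lambda>b. iexp (x \<bullet> b))" if x: "x \<in> U" for x
  proof -
    have H: "(\<lambda>n. Hf (G n) \<theta> x) \<longlonglongrightarrow> Hf Gstar \<theta> x" for \<theta>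
      by (rule char_conv[OF mu_prob mu_sets G_prob G_sets Gs_prob Gs_sets AEG AEGs R0 conv pos[OF x]])
    have "(\<lambda>n. complex_of_real (Hf (G n) 0 x) + \<i> * complex_of_real (Hf (G n) (- (pi/2)) x)) \<longlonglongrightarrow>
        complex_of_real (Hf Gstar 0 x) + \<i> * complex_of_real (Hf Gstar (- (pi/2)) x)"
      by (intro tendsto_add tendsto_of_real tendsto_mult tendsto_const H)
    then show ?thesis
      unfolding good_def iexp_integral[OF G_prob G_sets] iexp_integral[OF Gs_prob Gs_sets] .
  qed
  have weak: "(\<lambda>n. integral\<^sup>L (G n) f) \<longlonglongrightarrow> integral\<^sup>L Gstar f"
    if "continuous_on UNIV f" "\<And>x. \<bar>f x\<bar> \<le> 1" for f :: "'a \<Rightarrow> real"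
    by (rule weak_from_char[OF r(1) r(2) ch that(1)]) (use r in auto)
  show ?thesis
    by (rule weak_imp_lp[OF G_prob G_sets Gs_prob Gs_sets compact_cball AEG AEGs weak])
qed


end
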